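(* If $G$ is a cyclically $4$-edge-connected cubic bipartite graph with at least $8$ vertices, then every edge of $G$ is contained in at least $3$ perfect matchings of $G$.
   Context: An edge-cut $E(A,B)$ is cyclic if both $G[A]$ and $G[B]$ contain a cycle; $G$ is cyclically $4$-edge-connected if it has no cyclic edge-cut with fewer than four edges. *)

theory Defs
  imports Main
begin

definition graph :: "'a set \<Rightarrow> 'a set set \<Rightarrow> bool" where
  "graph V E \<longleftrightarrow> finite V \<and> (\<forall>e\<in>E. \<exists>u v. u \<noteq> v \<and> u \<in> V \<and> v \<in> V \<and> e = {u, v})"

definition degree :: "'a set set \<Rightarrow> 'a \<Rightarrow> nat" where
  "degree E v = card {e\<in>E. v \<in> e}"

definition cubic :: "'a set \<Rightarrow> 'a set set \<Rightarrow> bool" where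
  "cubic V E \<longleftrightarrow> (\<forall>v\<in>V. degree E v = 3)"

definition bipartite :: "'a set \<Rightarrow> 'a set set \<Rightarrow> bool" where
  "bipartite V E \<longleftrightarrow> (\<exists>X Y. X \<union> Y = V \<and> X \<inter> Y = {} \<and>
      (\<forall>e\<in>E. card (e \<inter> X) = 1 \<and> card (e \<inter> Y) = 1))"

definition induced_edges :: "'a set set \<Rightarrow> 'a set \<Rightarrow> 'a set set" where
  "induced_edges E A = {e\<in>E. e \<subseteq> A}"

definition has_cycle :: "'a set \<Rightarrow> 'a set set \<Rightarrow> bool" where
  "has_cycle A F \<longleftrightarrow> (\<exists>vs. length vs \<ge> 3 \<and> distinct vs \<and> set vs \<subseteq> A \<and>
      (\<forall>i < length vs. {vs ! i, vs ! ((i + 1) mod length vs)} \<in> F))"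

definition edge_cut :: "'a set set \<Rightarrow> 'a set \<Rightarrow> 'a set \<Rightarrow> 'a set set" where
  "edge_cut E A B = {e\<in>E. e \<inter> A \<noteq> {} \<and> e \<inter> B \<noteq> {}}"

definition cyclic_edge_cut :: "'a set \<Rightarrow> 'a set set \<Rightarrow> 'a set \<Rightarrow> 'a set \<Rightarrow> bool" where
  "cyclic_edge_cut V E A B \<longleftrightarrow> A \<union> B = V \<and> A \<inter> B = {} \<and>
      has_cycle A (induced_edges E A) \<and> has_cycle B (induced_edges E B)"

definition cyclically_4_edge_connected :: "'a set \<Rightarrow> 'a set set \<Rightarrow> bool" where
  "cyclically_4_edge_connected V E \<longleftrightarrow>
     (\<forall>A B. cyclic_edge_cut V E A B \<longrightarrow> card (edge_cut E A B) \<ge> 4)"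

definition perfect_matching :: "'a set \<Rightarrow> 'a set set \<Rightarrow> 'a set set \<Rightarrow> bool" where
  "perfect_matching V E M \<longleftrightarrow> M \<subseteq> E \<and> (\<forall>v\<in>V. \<exists>!e. e \<in> M \<and> v \<in> e)"

end

theory Submission
  imports Defs
begin

lemma hall:
  fixes N :: "'a \<Rightarrow> 'b set"
  assumes "finite A" "\<forall>a\<in>A. finite (N a)" "\<forall>S\<subseteq>A. card S \<le> card (\<Union>(N ` S))"
  shows "\<exists>f. inj_on f A \<and> (\<forall>a\<in>A. f a \<in> N a)"
  using assms
proof (induction "card A" arbitrary: A N rule: less_induct)
  case less
  show ?case
  proof (cases "A = {}")
    case True then show ?thesis by auto
  next
    case Ane: False
    show ?thesis
    proof (cases "\<exists>S. S \<subseteq> A \<and> S \<noteq> {} \<and> S \<noteq> A \<and> card S = card (\<Union>(N ` S))")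
      case True
      then obtain S where S: "S \<subseteq> A" "S \<noteq> {}" "S \<noteq> A" "card S = card (\<Union>(N ` S))" by blast
      have fS: "finite S" using S less.prems(1) finite_subset by blast
      have cS: "card S < card A" using S less.prems(1) psubset_card_mono by blast
      have h1: "\<forall>a\<in>S. finite (N a)" using less.prems(2) S(1) by blast
      have h2: "\<forall>T\<subseteq>S. card T \<le> card (\<Union>(N ` T))" using less.prems(3) S(1) by blast
      obtain f1 where f1: "inj_on f1 S" "\<forall>a\<in>S. f1 a \<in> N a"
        using less.hyps[OF cS fS h1 h2] by blast
      define NS where "NS = \<Union>(N ` S)"
      define N2 where "N2 = (\<lambda>a. N a - NS)"
      have cA: "card (A - S) < card A"
      proof -
        have "card S > 0" using S(2) fS by (simp add: card_gt_0_iff)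
        moreover have "card (A - S) = card A - card S" using fS S(1) by (rule card_Diff_subset)
        moreover have "card S \<le> card A" using cS by simp
        ultimately show ?thesis by linarith
      qed
      have fAS: "finite (A - S)" using less.prems(1) by blast
      have hall2: "\<forall>T\<subseteq>A - S. card T \<le> card (\<Union>(N2 ` T))"
      proof (intro allI impI)
        fix T assume T: "T \<subseteq> A - S"
        have fT: "finite T" using T fAS finite_subset by blast
        have eq: "\<Union>(N2 ` T) = \<Union>(N ` (T \<union> S)) - NS" unfolding N2_def NS_def by auto
        have fin: "finite (\<Union>(N ` (T \<union> S)))" using less.prems(2) T S(1) fT fS by auto
        have sub: "NS \<subseteq> \<Union>(N ` (T \<union> S))" unfolding NS_def by auto
        have c1: "card (T \<union> S) \<le> card (\<Union>(N ` (T \<union> S)))" using less.prems(3) T S(1) by (metis Diff_subset Un_subset_iff subset_trans)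
        moreover have "card (T \<union> S) = card T + card S" using T fT fS card_Un_disjoint by blast
        moreover have "card (\<Union>(N2 ` T)) = card (\<Union>(N ` (T \<union> S))) - card NS"
          using eq card_Diff_subset[OF finite_subset[OF sub fin] sub] by simp
        moreover have "card S = card NS" using S(4) NS_def by simp
        ultimately show "card T \<le> card (\<Union>(N2 ` T))" by linarith
      qed
      have h3: "\<forall>a\<in>A - S. finite (N2 a)" using less.prems(2) unfolding N2_def by blast
      obtain f2 where f2: "inj_on f2 (A - S)" "\<forall>a\<in>A-S. f2 a \<in> N2 a"
        using less.hyps[OF cA fAS h3 hall2] by blast
      define f where "f = (\<lambda>a. if a \<in> S then f1 a else f2 a)"
      show ?thesis
      proof (intro exI conjI)
        show "inj_on f A"
        proof (rule inj_onI)
          fix a b assume ab: "a \<in> A" "b \<in> A" "f a = f b"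
          show "a = b"
          proof (cases "a \<in> S"; cases "b \<in> S")
            assume "a \<in> S" "b \<in> S" then show ?thesis using ab f1(1) unfolding f_def by (auto dest: inj_onD)
          next
            assume "a \<notin> S" "b \<notin> S" then show ?thesis using ab f2(1) unfolding f_def by (auto dest: inj_onD)
          next
            assume as: "a \<in> S" "b \<notin> S"
            then have "f1 a \<in> NS" "f2 b \<notin> NS" using ab f1(2) f2(2) unfolding N2_def NS_def by auto
            then show ?thesis using ab as unfolding f_def by auto
          next
            assume as: "a \<notin> S" "b \<in> S"
            then have "f1 b \<in> NS" "f2 a \<notin> NS" using ab f1(2) f2(2) unfolding N2_def NS_def by auto
            then show ?thesis using ab as unfolding f_def by auto
          qed
        qed
        show "\<forall>a\<in>A. f a \<in> N a" using f1(2) f2(2) unfolding f_def N2_def by auto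
      qed
    next
      case False
      obtain a where a: "a \<in> A" using Ane by blast
      have "card {a} \<le> card (\<Union>(N ` {a}))" using less.prems(3) a by blast
      then have "card {a} \<le> card (N a)" by simp
      then have "N a \<noteq> {}" by auto
      then obtain b where b: "b \<in> N a" by blast
      define N2 where "N2 = (\<lambda>x. N x - {b})"
      have cA: "card (A - {a}) < card A" using a less.prems(1) by (rule card_Diff1_less[rotated])
      have fA: "finite (A - {a})" using less.prems(1) by blast
      have hall2: "\<forall>T\<subseteq>A - {a}. card T \<le> card (\<Union>(N2 ` T))"
      proof (intro allI impI)
        fix T assume T: "T \<subseteq> A - {a}"
        show "card T \<le> card (\<Union>(N2 ` T))"
        proof (cases "T = {}")
          case True then show ?thesis by simp
        next
          case Tne: False
          have fT: "finite T" using T fA finite_subset by blast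
          have "T \<noteq> A" using T a by auto
          then have "card T < card (\<Union>(N ` T))" using False T Tne less.prems(3)
          proof -
            have "T \<subseteq> A" using T by blast
            then have "card T \<le> card (\<Union>(N ` T))" using less.prems(3) by blast
            moreover have "card T \<noteq> card (\<Union>(N ` T))" using False \<open>T \<subseteq> A\<close> Tne \<open>T \<noteq> A\<close> by blast
            ultimately show ?thesis by simp
          qed
          moreover have "\<Union>(N2 ` T) = \<Union>(N ` T) - {b}" unfolding N2_def by auto
          moreover have "finite (\<Union>(N ` T))" using less.prems(2) T fT by auto
          ultimately show ?thesis using card_Diff_singleton_if[of "\<Union>(N ` T)" b] by (auto simp del: UN_simps)
        qed
      qed
      have h3: "\<forall>x\<in>A - {a}. finite (N2 x)" using less.prems(2) unfolding N2_def by blast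
      obtain f2 where f2: "inj_on f2 (A - {a})" "\<forall>x\<in>A-{a}. f2 x \<in> N2 x"
        using less.hyps[OF cA fA h3 hall2] by blast
      show ?thesis
      proof (intro exI conjI)
        show "inj_on (f2(a := b)) A" using f2 unfolding N2_def inj_on_def by auto
        show "\<forall>x\<in>A. (f2(a := b)) x \<in> N x" using f2 b unfolding N2_def by auto
      qed
    qed
  qed
qed

lemma edge_other:
  assumes wf: "\<forall>e\<in>F. \<exists>a b. a \<noteq> b \<and> a \<in> A \<and> b \<in> A \<and> e = {a, b}"
    and "e \<in> F" "h \<in> e"
  shows "\<exists>w. w \<noteq> h \<and> w \<in> A \<and> e = {h, w}"
proof -
  obtain a b where ab: "a \<noteq> b" "a \<in> A" "b \<in> A" "e = {a, b}" using wf assms(2) by blast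
  show ?thesis
  proof (cases "h = a")
    case True then show ?thesis using ab by (intro exI[of _ b]) auto
  next
    case False then have "h = b" using ab assms(3) by blast
    then show ?thesis using ab by (intro exI[of _ a]) auto
  qed
qed

lemma path_cycle:
  assumes fin: "finite A" and ne: "A \<noteq> {}"
    and wf: "\<forall>e\<in>F. \<exists>a b. a \<noteq> b \<and> a \<in> A \<and> b \<in> A \<and> e = {a, b}"
    and deg: "\<forall>a\<in>A. 2 \<le> card {e\<in>F. a \<in> e}"
  shows "has_cycle A F"
proof -
  define P where "P = {vs. vs \<noteq> [] \<and> distinct vs \<and> set vs \<subseteq> A \<and>
      (\<forall>i. Suc i < length vs \<longrightarrow> {vs!i, vs!Suc i} \<in> F)}"
  obtain a0 where a0: "a0 \<in> A" using ne by blast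
  have P0: "[a0] \<in> P" unfolding P_def using a0 by auto
  have bnd: "\<forall>ws. ws \<in> P \<longrightarrow> length ws \<le> card A"
  proof (intro allI impI)
    fix ws assume "ws \<in> P"
    then have d: "distinct ws" and s: "set ws \<subseteq> A" unfolding P_def by simp_all
    have "card (set ws) \<le> card A" using card_mono[OF fin s] .
    then show "length ws \<le> card A" using distinct_card[OF d] by simp
  qed
  obtain vs where vs: "vs \<in> P" and vmax: "\<forall>ws. ws \<in> P \<longrightarrow> length ws \<le> length vs"
  proof -
    have "\<forall>ws. ws \<in> P \<longrightarrow> length ws < Suc (card A)" using bnd by auto
    then show ?thesis using Lattices_Big.ex_has_greatest_nat[of "\<lambda>ws. ws \<in> P" "[a0]" length "Suc (card A)"] P0 that by blast
  qed
  have vsP: "vs \<noteq> []" "distinct vs" "set vs \<subseteq> A"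
     "\<And>i. Suc i < length vs \<Longrightarrow> {vs!i, vs!Suc i} \<in> F" using vs unfolding P_def by auto
  define h where "h = vs ! 0"
  have hA: "h \<in> A" using vsP unfolding h_def by (simp add: subset_iff)
  have "2 \<le> card {e\<in>F. h \<in> e}" using deg hA by blast
  then obtain e1 e2 where e12: "e1 \<in> F" "h \<in> e1" "e2 \<in> F" "h \<in> e2" "e1 \<noteq> e2"
    by (auto simp: numeral_2_eq_2 card_le_Suc_iff)
  obtain w1 where w1: "w1 \<noteq> h" "w1 \<in> A" "e1 = {h, w1}" using edge_other[OF wf e12(1,2)] by blast
  obtain w2 where w2: "w2 \<noteq> h" "w2 \<in> A" "e2 = {h, w2}" using edge_other[OF wf e12(3,4)] by blast
  have "w1 \<noteq> w2" using w1 w2 e12 by blast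
  then obtain w where w: "w \<noteq> h" "w \<in> A" "{h, w} \<in> F" "w \<noteq> vs ! 1"
  proof (cases "w1 = vs ! 1")
    case True
    show thesis using that[of w2] w2 e12 True \<open>w1 \<noteq> w2\<close> by simp
  next
    case False
    show thesis using that[of w1] w1 e12 False by simp
  qed
  have win: "w \<in> set vs"
  proof (rule ccontr)
    assume nw: "w \<notin> set vs"
    have "w # vs \<in> P"
      unfolding P_def
    proof (intro CollectI conjI allI impI)
      show "w # vs \<noteq> []" by simp
      show "distinct (w # vs)" using nw vsP by simp
      show "set (w # vs) \<subseteq> A" using w vsP by simp
      fix i assume i: "Suc i < length (w # vs)"
      show "{(w # vs) ! i, (w # vs) ! Suc i} \<in> F"
      proof (cases i)
        case 0 then show ?thesis using w h_def by (simp add: insert_commute)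
      next
        case (Suc k) then show ?thesis using i vsP(4)[of k] by simp
      qed
    qed
    then have "length (w # vs) \<le> length vs" using vmax by blast
    then show False by simp
  qed
  then obtain j where j: "j < length vs" "vs ! j = w" by (metis in_set_conv_nth)
  have j0: "j \<noteq> 0"
  proof
    assume "j = 0"
    then have "w = h" using j h_def by simp
    then show False using w(1) by simp
  qed
  have j1: "j \<noteq> 1" using j w by auto
  define cs where "cs = take (Suc j) vs"
  have lcs: "length cs = Suc j" using j unfolding cs_def by simp
  show ?thesis
    unfolding has_cycle_def
  proof (intro exI conjI allI impI)
    show "3 \<le> length cs" using lcs j0 j1 by simp
    show "distinct cs" unfolding cs_def using vsP by simp
    show "set cs \<subseteq> A" unfolding cs_def using vsP set_take_subset by fastforce
    fix i assume i: "i < length cs"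
    show "{cs ! i, cs ! ((i + 1) mod length cs)} \<in> F"
    proof (cases "i < j")
      case True
      then have "(i + 1) mod length cs = Suc i" using lcs by simp
      then show ?thesis using True j vsP(4)[of i] unfolding cs_def by simp
    next
      case False
      then have "i = j" using i lcs by simp
      then have "(i + 1) mod length cs = 0" using lcs by simp
      then show ?thesis using \<open>i = j\<close> j w h_def unfolding cs_def by (simp add: insert_commute)
    qed
  qed
qed

lemma has_cycle_mono: "has_cycle A F \<Longrightarrow> A \<subseteq> A' \<Longrightarrow> F \<subseteq> F' \<Longrightarrow> has_cycle A' F'"
  unfolding has_cycle_def
proof -
  assume h: "\<exists>vs. length vs \<ge> 3 \<and> distinct vs \<and> set vs \<subseteq> A \<and>
      (\<forall>i < length vs. {vs ! i, vs ! ((i + 1) mod length vs)} \<in> F)" "A \<subseteq> A'" "F \<subseteq> F'"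
  then obtain vs where v: "length vs \<ge> 3" "distinct vs" "set vs \<subseteq> A"
      "\<forall>i < length vs. {vs ! i, vs ! ((i + 1) mod length vs)} \<in> F" by blast
  have "set vs \<subseteq> A'" using v(3) h(2) by (rule subset_trans)
  moreover have "\<forall>i < length vs. {vs ! i, vs ! ((i + 1) mod length vs)} \<in> F'" using v(4) h(3) by (simp add: subset_iff)
  ultimately show "\<exists>vs. length vs \<ge> 3 \<and> distinct vs \<and> set vs \<subseteq> A' \<and>
      (\<forall>i < length vs. {vs ! i, vs ! ((i + 1) mod length vs)} \<in> F')" using v(1,2) by blast
qed

lemma count_cycle:
  assumes "finite A" "A \<noteq> {}"
    "\<forall>e\<in>F. \<exists>a b. a \<noteq> b \<and> a \<in> A \<and> b \<in> A \<and> e = {a, b}"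
    "card A \<le> card F"
  shows "has_cycle A F"
  using assms
proof (induction "card A" arbitrary: A F rule: less_induct)
  case less
  have finF: "finite F"
  proof (rule finite_subset)
    show "F \<subseteq> Pow A"
    proof
      fix e assume "e \<in> F"
      then obtain a b where "a \<in> A" "b \<in> A" "e = {a, b}" using less.prems(3) by blast
      then show "e \<in> Pow A" by simp
    qed
    show "finite (Pow A)" using less.prems(1) by simp
  qed
  show ?case
  proof (cases "\<exists>w\<in>A. card {e\<in>F. w \<in> e} \<le> 1")
    case False
    then have "\<forall>a\<in>A. 2 \<le> card {e\<in>F. a \<in> e}" by (auto simp: not_le)
    then show ?thesis using path_cycle[OF less.prems(1-3)] by blast
  next
    case True
    then obtain w where w: "w \<in> A" "card {e\<in>F. w \<in> e} \<le> 1" by blast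
    define A' where "A' = A - {w}"
    define F' where "F' = {e\<in>F. w \<notin> e}"
    have cA: "card A' < card A" unfolding A'_def using w(1) less.prems(1) by (rule card_Diff1_less[rotated])
    have fA: "finite A'" unfolding A'_def using less.prems(1) by simp
    have cF: "card F = card F' + card {e\<in>F. w \<in> e}"
    proof -
      have "F = F' \<union> {e\<in>F. w \<in> e}" unfolding F'_def by blast
      moreover have "F' \<inter> {e\<in>F. w \<in> e} = {}" unfolding F'_def by blast
      ultimately show ?thesis using finF card_Un_disjoint[of F' "{e\<in>F. w \<in> e}"]
        by (metis (no_types, lifting) finite_Un)
    qed
    have A'ne: "A' \<noteq> {}"
    proof
      assume "A' = {}"
      then have Aw: "A = {w}" unfolding A'_def using w by blast
      have "F = {}"
      proof (rule ccontr)
        assume "F \<noteq> {}"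
        then obtain e where "e \<in> F" by blast
        then show False using less.prems(3) Aw by blast
      qed
      then show False using less.prems(4) Aw by simp
    qed
    have wf': "\<forall>e\<in>F'. \<exists>a b. a \<noteq> b \<and> a \<in> A' \<and> b \<in> A' \<and> e = {a, b}"
      using less.prems(3) unfolding F'_def A'_def by blast
    have "card A' = card A - 1" unfolding A'_def using w less.prems(1) by simp
    then have c': "card A' \<le> card F'" using cF w(2) less.prems(4) by linarith
    have "has_cycle A' F'" using less.hyps[OF cA fA A'ne wf' c'] .
    then show ?thesis by (rule has_cycle_mono) (auto simp: A'_def F'_def)
  qed
qed

locale cbg =
  fixes V :: "'a set" and E :: "'a set set" and X Y :: "'a set"
  assumes g: "graph V E" and cub: "cubic V E"
    and XYV: "X \<union> Y = V" and XYd: "X \<inter> Y = {}"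
    and sides: "\<forall>e\<in>E. card (e \<inter> X) = 1 \<and> card (e \<inter> Y) = 1"
begin

lemma finV: "finite V" using g unfolding graph_def by blast

lemma E_pow: "E \<subseteq> Pow V"
proof
  fix e assume "e \<in> E"
  then obtain u v where "u \<in> V" "v \<in> V" "e = {u, v}" using g unfolding graph_def by blast
  then show "e \<in> Pow V" by simp
qed

lemma finE: "finite E" using finite_subset[OF E_pow] finV by simp

lemma finX: "finite X" using finV XYV by (metis finite_Un)
lemma finY: "finite Y" using finV XYV by (metis finite_Un)

lemma edge_XY:
  assumes "e \<in> E"
  shows "\<exists>a b. a \<in> X \<and> b \<in> Y \<and> e = {a, b}"
proof -
  obtain p q where pq: "p \<noteq> q" "p \<in> V" "q \<in> V" "e = {p, q}" using g assms unfolding graph_def by blast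
  have cX: "card (e \<inter> X) = 1" using sides assms by blast
  show ?thesis
  proof (cases "p \<in> X")
    case True
    have "q \<notin> X"
    proof
      assume "q \<in> X"
      then have "e \<inter> X = {p, q}" using True pq by auto
      then show False using cX pq by simp
    qed
    then have "q \<in> Y" using pq XYV by blast
    then show ?thesis using True pq by blast
  next
    case False
    then have pY: "p \<in> Y" using pq XYV by blast
    have "e \<inter> X \<noteq> {}" using cX by (metis card.empty zero_neq_one)
    then have "q \<in> X" using pq False by blast
    then show ?thesis using pY pq by (metis insert_commute)
  qed
qed

definition star :: "'a \<Rightarrow> 'a set set" where "star v = {e\<in>E. v \<in> e}"

lemma card_star: "v \<in> V \<Longrightarrow> card (star v) = 3"
  using cub unfolding cubic_def degree_def star_def by blast

lemma finstar: "finite (star v)" unfolding star_def using finE by simp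

lemma star_X: "a \<in> X \<Longrightarrow> e \<in> star a \<Longrightarrow> \<exists>b\<in>Y. e = {a, b}"
proof -
  assume a: "a \<in> X" "e \<in> star a"
  then have "e \<in> E" "a \<in> e" unfolding star_def by auto
  then obtain a' b where ab: "a' \<in> X" "b \<in> Y" "e = {a', b}" using edge_XY by blast
  then have "a = a'" using a \<open>a \<in> e\<close> XYd by blast
  then show ?thesis using ab by blast
qed

lemma star_Y: "b \<in> Y \<Longrightarrow> e \<in> star b \<Longrightarrow> \<exists>a\<in>X. e = {a, b}"
proof -
  assume b: "b \<in> Y" "e \<in> star b"
  then have "e \<in> E" "b \<in> e" unfolding star_def by auto
  then obtain a b' where ab: "a \<in> X" "b' \<in> Y" "e = {a, b'}" using edge_XY by blast
  then have "b = b'" using b \<open>b \<in> e\<close> XYd by blast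
  then show ?thesis using ab by blast
qed

lemma card_stars:
  assumes "Z \<subseteq> X \<or> Z \<subseteq> Y"
  shows "card (\<Union>z\<in>Z. star z) = 3 * card Z"
proof -
  have fZ: "finite Z" using assms finX finY finite_subset by blast
  have ZV: "Z \<subseteq> V" using assms XYV by blast
  have disj: "\<forall>z1\<in>Z. \<forall>z2\<in>Z. z1 \<noteq> z2 \<longrightarrow> star z1 \<inter> star z2 = {}"
  proof (intro ballI impI)
    fix z1 z2 assume z: "z1 \<in> Z" "z2 \<in> Z" "z1 \<noteq> z2"
    show "star z1 \<inter> star z2 = {}"
    proof (rule ccontr)
      assume "star z1 \<inter> star z2 \<noteq> {}"
      then obtain e where e: "e \<in> star z1" "e \<in> star z2" by blast
      show False
      proof (cases "Z \<subseteq> X")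
        case True
        then obtain b where "b \<in> Y" "e = {z1, b}" using star_X e z by blast
        moreover have "z2 \<in> e" "z2 \<in> X" using e True z unfolding star_def by auto
        ultimately show False using z XYd by blast
      next
        case False
        then have ZY: "Z \<subseteq> Y" using assms by blast
        then obtain a where "a \<in> X" "e = {a, z1}" using star_Y e z by blast
        moreover have "z2 \<in> e" "z2 \<in> Y" using e ZY z unfolding star_def by auto
        ultimately show False using z XYd by blast
      qed
    qed
  qed
  have "card (\<Union>z\<in>Z. star z) = (\<Sum>z\<in>Z. card (star z))"
    using card_UN_disjoint[OF fZ] finstar disj by blast
  also have "\<dots> = (\<Sum>z\<in>Z. 3)" using card_star ZV by (intro sum.cong) auto
  finally show ?thesis by simp
qed

lemma E_X: "E = (\<Union>x\<in>X. star x)"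
proof
  show "E \<subseteq> (\<Union>x\<in>X. star x)"
  proof
    fix e assume e: "e \<in> E"
    then obtain a b where "a \<in> X" "b \<in> Y" "e = {a, b}" using edge_XY by blast
    then show "e \<in> (\<Union>x\<in>X. star x)" using e unfolding star_def by blast
  qed
  show "(\<Union>x\<in>X. star x) \<subseteq> E" unfolding star_def by blast
qed

lemma E_Y: "E = (\<Union>y\<in>Y. star y)"
proof
  show "E \<subseteq> (\<Union>y\<in>Y. star y)"
  proof
    fix e assume e: "e \<in> E"
    then obtain a b where "a \<in> X" "b \<in> Y" "e = {a, b}" using edge_XY by blast
    then show "e \<in> (\<Union>y\<in>Y. star y)" using e unfolding star_def by blast
  qed
  show "(\<Union>y\<in>Y. star y) \<subseteq> E" unfolding star_def by blast
qed

lemma cardXY: "card X = card Y"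
proof -
  have "card E = 3 * card X" using card_stars[of X] E_X by simp
  moreover have "card E = 3 * card Y" using card_stars[of Y] E_Y by simp
  ultimately show ?thesis by simp
qed

end

context cbg begin

definition NB :: "'a set \<Rightarrow> 'a set" where "NB S = {b\<in>Y. \<exists>s\<in>S. {s, b} \<in> E}"

lemma induced_wf: "\<forall>e\<in>induced_edges E W. \<exists>a b. a \<noteq> b \<and> a \<in> W \<and> b \<in> W \<and> e = {a, b}"
proof
  fix e assume e: "e \<in> induced_edges E W"
  then have "e \<in> E" "e \<subseteq> W" unfolding induced_edges_def by auto
  then obtain a b where "a \<noteq> b" "e = {a, b}" using g unfolding graph_def by blast
  then show "\<exists>a b. a \<noteq> b \<and> a \<in> W \<and> b \<in> W \<and> e = {a, b}" using \<open>e \<subseteq> W\<close> by blast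
qed

lemma fin_induced: "finite (induced_edges E W)" unfolding induced_edges_def using finE by simp

lemma key:
  assumes c4: "cyclically_4_edge_connected V E"
    and u: "u \<in> X" and x: "x \<in> X" and ux: "u \<noteq> x"
    and S: "S \<subseteq> X - {u, x}" "S \<noteq> {}"
  shows "card S + 2 \<le> card (NB S)"
proof (rule ccontr)
  assume "\<not> card S + 2 \<le> card (NB S)"
  then have small: "card (NB S) \<le> card S + 1" by simp
  have NBY: "NB S \<subseteq> Y" unfolding NB_def by blast
  have SX: "S \<subseteq> X" using S by blast
  have fS: "finite S" using SX finX finite_subset by blast
  have fN: "finite (NB S)" using NBY finY finite_subset by blast
  have cS1: "card S \<ge> 1"
  proof (rule ccontr)
    assume "\<not> 1 \<le> card S"
    then have "card S = 0" by simp
    then show False using S(2) fS by simp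
  qed
  have cSX: "card S + 2 \<le> card X"
  proof -
    have "card S \<le> card (X - {u, x})" using card_mono[OF _ S(1)] finX by simp
    moreover have "card (X - {u, x}) = card X - 2"
    proof -
      have sub: "{u, x} \<subseteq> X" using u x by simp
      have c2: "card {u, x} = 2" using ux by simp
      show ?thesis using card_Diff_subset[OF _ sub] c2 by simp
    qed
    moreover have "card X \<ge> 2"
    proof -
      have "card {u, x} \<le> card X" using card_mono[OF finX] u x by simp
      then show ?thesis using ux by simp
    qed
    ultimately show ?thesis by linarith
  qed
  define W where "W = S \<union> NB S"
  define W' where "W' = V - W"
  have WV: "W \<subseteq> V" unfolding W_def using SX NBY XYV by blast
  have cW: "card W = card S + card (NB S)"
  proof -
    have "S \<inter> NB S = {}" using SX NBY XYd by blast
    then show ?thesis unfolding W_def using card_Un_disjoint[OF fS fN] by simp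
  qed
  have W'eq: "W' = (X - S) \<union> (Y - NB S)" unfolding W'_def W_def using XYV XYd SX NBY by blast
  have cW': "card W' = (card X - card S) + (card Y - card (NB S))"
  proof -
    have "card W' = card (X - S) + card (Y - NB S)"
    proof -
      have "(X - S) \<inter> (Y - NB S) = {}" using XYd by blast
      moreover have "finite (X - S)" "finite (Y - NB S)" using finX finY by simp_all
      ultimately show ?thesis unfolding W'eq using card_Un_disjoint by blast
    qed
    then show ?thesis using card_Diff_subset[OF fS SX] card_Diff_subset[OF fN NBY] by simp
  qed
  have cNY: "card (NB S) \<le> card Y" using card_mono[OF finY NBY] .
  have inW: "(\<Union>s\<in>S. star s) \<subseteq> induced_edges E W"
  proof
    fix e assume "e \<in> (\<Union>s\<in>S. star s)"
    then obtain s where s: "s \<in> S" "e \<in> star s" by blast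
    then obtain b where b: "b \<in> Y" "e = {s, b}" using star_X SX by blast
    have "e \<in> E" using s unfolding star_def by simp
    then have "b \<in> NB S" using b s unfolding NB_def by blast
    then show "e \<in> induced_edges E W" using \<open>e \<in> E\<close> b s unfolding induced_edges_def W_def by blast
  qed
  have cyc1: "has_cycle W (induced_edges E W)"
  proof (rule count_cycle)
    show "finite W" using WV finV finite_subset by blast
    show "W \<noteq> {}" using S(2) unfolding W_def by blast
    show "\<forall>e\<in>induced_edges E W. \<exists>a b. a \<noteq> b \<and> a \<in> W \<and> b \<in> W \<and> e = {a, b}" by (rule induced_wf)
    have "card (\<Union>s\<in>S. star s) = 3 * card S" using card_stars SX by blast
    moreover have "card (\<Union>s\<in>S. star s) \<le> card (induced_edges E W)" using card_mono[OF fin_induced inW] .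
    ultimately have "3 * card S \<le> card (induced_edges E W)" by simp
    moreover have "card W \<le> 3 * card S" using cW small cS1 by simp
    ultimately show "card W \<le> card (induced_edges E W)" by (rule order_trans[rotated])
  qed
  have inW': "(\<Union>y\<in>Y - NB S. star y) \<subseteq> induced_edges E W'"
  proof
    fix e assume "e \<in> (\<Union>y\<in>Y - NB S. star y)"
    then obtain y where y: "y \<in> Y - NB S" "e \<in> star y" by blast
    then obtain a where a: "a \<in> X" "e = {a, y}" using star_Y by blast
    have "e \<in> E" using y unfolding star_def by simp
    have "a \<notin> S"
    proof
      assume "a \<in> S"
      then have "y \<in> NB S" using a \<open>e \<in> E\<close> y unfolding NB_def by blast
      then show False using y by blast
    qed
    then have "a \<in> W'" "y \<in> W'" using a y unfolding W'eq by auto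
    then show "e \<in> induced_edges E W'" using \<open>e \<in> E\<close> a unfolding induced_edges_def by blast
  qed
  have cyc2: "has_cycle W' (induced_edges E W')"
  proof (rule count_cycle)
    show "finite W'" unfolding W'_def using finV by simp
    show "W' \<noteq> {}" using u S(1) unfolding W'eq by blast
    show "\<forall>e\<in>induced_edges E W'. \<exists>a b. a \<noteq> b \<and> a \<in> W' \<and> b \<in> W' \<and> e = {a, b}" by (rule induced_wf)
    have "card (\<Union>y\<in>Y - NB S. star y) = 3 * card (Y - NB S)" using card_stars by blast
    moreover have "card (\<Union>y\<in>Y - NB S. star y) \<le> card (induced_edges E W')" using card_mono[OF fin_induced inW'] .
    moreover have "card (Y - NB S) = card Y - card (NB S)" using card_Diff_subset[OF fN NBY] .
    ultimately show "card W' \<le> card (induced_edges E W')" using cW' small cSX cardXY cNY by linarith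
  qed
  have cutsub: "edge_cut E W W' \<subseteq> (\<Union>y\<in>NB S. star y) - (\<Union>s\<in>S. star s)"
  proof
    fix e assume e: "e \<in> edge_cut E W W'"
    then have eE: "e \<in> E" and eW: "e \<inter> W \<noteq> {}" and eW': "e \<inter> W' \<noteq> {}" unfolding edge_cut_def by auto
    obtain a b where ab: "a \<in> X" "b \<in> Y" "e = {a, b}" using edge_XY eE by blast
    have aS: "a \<notin> S"
    proof
      assume "a \<in> S"
      then have "b \<in> NB S" using ab eE unfolding NB_def by blast
      then have "e \<subseteq> W" using ab \<open>a \<in> S\<close> unfolding W_def by blast
      then show False using eW' unfolding W'_def by blast
    qed
    have bN: "b \<in> NB S"
    proof (rule ccontr)
      assume "b \<notin> NB S"
      have "a \<notin> NB S" using ab NBY XYd by blast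
      then have aW: "a \<notin> W" using aS unfolding W_def by blast
      have "b \<notin> S" using ab SX XYd by blast
      then have bW: "b \<notin> W" using \<open>b \<notin> NB S\<close> unfolding W_def by blast
      show False using eW ab aW bW by blast
    qed
    have "e \<in> star b" using eE ab unfolding star_def by simp
    moreover have "e \<notin> (\<Union>s\<in>S. star s)"
    proof
      assume "e \<in> (\<Union>s\<in>S. star s)"
      then obtain s where "s \<in> S" "s \<in> e" unfolding star_def by blast
      then have "s = a" using ab SX XYd by blast
      then show False using aS \<open>s \<in> S\<close> by blast
    qed
    ultimately show "e \<in> (\<Union>y\<in>NB S. star y) - (\<Union>s\<in>S. star s)" using bN by blast
  qed
  have sub2: "(\<Union>s\<in>S. star s) \<subseteq> (\<Union>y\<in>NB S. star y)"
  proof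
    fix e assume "e \<in> (\<Union>s\<in>S. star s)"
    then obtain s where s: "s \<in> S" "e \<in> star s" by blast
    then obtain b where b: "b \<in> Y" "e = {s, b}" using star_X SX by blast
    have "e \<in> E" using s unfolding star_def by simp
    then have "b \<in> NB S" using b s unfolding NB_def by blast
    moreover have "e \<in> star b" using \<open>e \<in> E\<close> b unfolding star_def by simp
    ultimately show "e \<in> (\<Union>y\<in>NB S. star y)" by blast
  qed
  have finU: "finite (\<Union>y\<in>NB S. star y)" using fN finstar by blast
  have "card ((\<Union>y\<in>NB S. star y) - (\<Union>s\<in>S. star s)) = 3 * card (NB S) - 3 * card S"
    using card_Diff_subset[OF finite_subset[OF sub2 finU] sub2] card_stars SX NBY by simp
  then have "card (edge_cut E W W') \<le> 3 * card (NB S) - 3 * card S"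
    using card_mono[OF finite_Diff[OF finU] cutsub] by simp
  then have cut3: "card (edge_cut E W W') \<le> 3" using small by linarith
  have "cyclic_edge_cut V E W W'"
    unfolding cyclic_edge_cut_def using WV cyc1 cyc2 unfolding W'_def by blast
  then have "card (edge_cut E W W') \<ge> 4" using c4 unfolding cyclically_4_edge_connected_def by blast
  then show False using cut3 by simp
qed

end

context cbg begin

lemma pm_from_bij:
  assumes b: "bij_betw h X Y" and ed: "\<forall>a\<in>X. {a, h a} \<in> E"
  shows "perfect_matching V E ((\<lambda>a. {a, h a}) ` X)"
  unfolding perfect_matching_def
proof (intro conjI ballI)
  show "(\<lambda>a. {a, h a}) ` X \<subseteq> E" using ed by auto
  have hXY: "h ` X = Y" using bij_betw_imp_surj_on[OF b] .
  have hY: "h a \<in> Y" if "a \<in> X" for a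
  proof -
    have "h a \<in> h ` X" using that by (rule imageI)
    then show "h a \<in> Y" using hXY by simp
  qed
  have inj: "inj_on h X" using bij_betw_imp_inj_on[OF b] .
  fix t assume t: "t \<in> V"
  show "\<exists>!e. e \<in> (\<lambda>a. {a, h a}) ` X \<and> t \<in> e"
  proof (cases "t \<in> X")
    case True
    show ?thesis
    proof (rule ex1I[of _ "{t, h t}"])
      show "{t, h t} \<in> (\<lambda>a. {a, h a}) ` X \<and> t \<in> {t, h t}" using True by blast
      fix e assume e: "e \<in> (\<lambda>a. {a, h a}) ` X \<and> t \<in> e"
      then have "e \<in> (\<lambda>a. {a, h a}) ` X" by simp
      then obtain a where a2: "e = {a, h a}" "a \<in> X" by (rule imageE)
      note a = a2(2) a2(1)
      have "h a \<noteq> t" using hY[OF a(1)] True XYd by blast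
      moreover have "t = a \<or> t = h a" using e a by simp
      ultimately have "a = t" by simp
      then show "e = {t, h t}" using a by simp
    qed
  next
    case False
    then have tY: "t \<in> Y" using t XYV by blast
    then have "t \<in> h ` X" using hXY by simp
    then obtain a0 where a0: "a0 \<in> X" "h a0 = t" by (auto elim: imageE)
    show ?thesis
    proof (rule ex1I[of _ "{a0, t}"])
      show "{a0, t} \<in> (\<lambda>a. {a, h a}) ` X \<and> t \<in> {a0, t}" using a0 by blast
      fix e assume e: "e \<in> (\<lambda>a. {a, h a}) ` X \<and> t \<in> e"
      then have "e \<in> (\<lambda>a. {a, h a}) ` X" by simp
      then obtain a where a2: "e = {a, h a}" "a \<in> X" by (rule imageE)
      note a = a2(2) a2(1)
      have "a \<noteq> t" using a(1) False by blast
      moreover have "t = a \<or> t = h a" using e a by simp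
      ultimately have "h a = t" by simp
      then have "h a = h a0" using a0 by simp
      then have "a = a0" by (rule inj_onD[OF inj _ a(1) a0(1)])
      then show "e = {a0, t}" using a \<open>h a = t\<close> by simp
    qed
  qed
qed

lemma card_minus2: "finite A \<Longrightarrow> card A \<le> card (A - {v, y}) + 2"
proof -
  assume f: "finite A"
  have "card A \<le> card ((A - {v, y}) \<union> {v, y})" using f by (intro card_mono) auto
  also have "\<dots> \<le> card (A - {v, y}) + card {v, y}" by (rule card_Un_le)
  also have "card {v, y} \<le> 2" by (cases "v = y") auto
  finally show ?thesis by simp
qed

lemma two_edges:
  assumes c4: "cyclically_4_edge_connected V E"
    and u: "u \<in> X" and x: "x \<in> X" and ux: "u \<noteq> x"
    and v: "v \<in> Y" and y: "y \<in> Y" and vy: "v \<noteq> y"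
    and e1: "{u, v} \<in> E" and e2: "{x, y} \<in> E"
  shows "\<exists>M. perfect_matching V E M \<and> {u, v} \<in> M \<and> {x, y} \<in> M"
proof -
  define A where "A = X - {u, x}"
  define B where "B = Y - {v, y}"
  define N where "N = (\<lambda>a. {b\<in>B. {a, b} \<in> E})"
  have fA: "finite A" unfolding A_def using finX by simp
  have fB: "finite B" unfolding B_def using finY by simp
  have fN: "\<forall>a\<in>A. finite (N a)" unfolding N_def using fB by simp
  have hall_c: "\<forall>S\<subseteq>A. card S \<le> card (\<Union>(N ` S))"
  proof (intro allI impI)
    fix S assume S: "S \<subseteq> A"
    show "card S \<le> card (\<Union>(N ` S))"
    proof (cases "S = {}")
      case True then show ?thesis by simp
    next
      case False
      have S': "S \<subseteq> X - {u, x}" using S unfolding A_def .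
      have k: "card S + 2 \<le> card (NB S)" using key[OF c4 u x ux S' False] .
      have eq: "\<Union>(N ` S) = NB S - {v, y}" unfolding N_def NB_def B_def by auto
      have "finite (NB S)" unfolding NB_def using finY by simp
      then have "card (NB S) \<le> card (NB S - {v, y}) + 2" by (rule card_minus2)
      then show ?thesis using k eq by simp
    qed
  qed
  obtain g where g: "inj_on g A" "\<forall>a\<in>A. g a \<in> N a" using hall[OF fA fN hall_c] by blast
  have cA: "card A = card X - 2"
  proof -
    have sub: "{u, x} \<subseteq> X" using u x by simp
    have c2: "card {u, x} = 2" using ux by simp
    show ?thesis unfolding A_def using card_Diff_subset[OF _ sub] c2 by simp
  qed
  have cB: "card B = card Y - 2"
  proof -
    have sub: "{v, y} \<subseteq> Y" using v y by simp
    have c2: "card {v, y} = 2" using vy by simp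
    show ?thesis unfolding B_def using card_Diff_subset[OF _ sub] c2 by simp
  qed
  have gB: "g ` A \<subseteq> B" using g(2) unfolding N_def by auto
  have gAB: "g ` A = B"
  proof (rule card_subset_eq[OF fB gB])
    show "card (g ` A) = card B" using card_image[OF g(1)] cA cB cardXY by simp
  qed
  define h where "h = (\<lambda>a. if a = u then v else if a = x then y else g a)"
  have hu: "h u = v" unfolding h_def by simp
  have hx: "h x = y" unfolding h_def using ux by simp
  have hA: "\<And>a. a \<in> A \<Longrightarrow> h a = g a" unfolding h_def A_def by simp
  have XA: "X = A \<union> {u, x}" unfolding A_def using u x by auto
  have YB: "Y = B \<union> {v, y}" unfolding B_def using v y by auto
  have hX: "h ` X = Y"
  proof -
    have "h ` X = h ` A \<union> {h u, h x}" unfolding XA by simp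
    also have "h ` A = g ` A" using hA by simp
    finally show ?thesis using gAB hu hx YB by simp
  qed
  have hinj: "inj_on h X"
  proof (rule eq_card_imp_inj_on[OF finX])
    show "card (h ` X) = card X" using hX cardXY by simp
  qed
  have bij: "bij_betw h X Y" unfolding bij_betw_def using hinj hX by simp
  have ed: "\<forall>a\<in>X. {a, h a} \<in> E"
  proof
    fix a assume a: "a \<in> X"
    show "{a, h a} \<in> E"
    proof (cases "a \<in> A")
      case True then show ?thesis using g(2) hA unfolding N_def by simp
    next
      case False
      then have "a = u \<or> a = x" using a unfolding A_def by simp
      then show ?thesis
      proof
        assume "a = u" then show ?thesis using hu e1 by simp
      next
        assume "a = x" then show ?thesis using hx e2 by simp
      qed
    qed
  qed
  show ?thesis
  proof (intro exI conjI)
    show "perfect_matching V E ((\<lambda>a. {a, h a}) ` X)" using pm_from_bij[OF bij ed] .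
    show "{u, v} \<in> (\<lambda>a. {a, h a}) ` X" using image_eqI[of "{u, v}" "\<lambda>a. {a, h a}" u X] u hu by simp
    show "{x, y} \<in> (\<lambda>a. {a, h a}) ` X" using image_eqI[of "{x, y}" "\<lambda>a. {a, h a}" x X] x hx by simp
  qed
qed

end

theorem mainTheorem14:
  fixes V :: "'a set" and E :: "'a set set"
  assumes "graph V E"
    and "cubic V E"
    and "bipartite V E"
    and "cyclically_4_edge_connected V E"
    and "card V \<ge> 8"
    and "e \<in> E"
  shows "card {M. perfect_matching V E M \<and> e \<in> M} \<ge> 3"
proof -
  obtain X Y where XY: "X \<union> Y = V" "X \<inter> Y = {}" "\<forall>e\<in>E. card (e \<inter> X) = 1 \<and> card (e \<inter> Y) = 1"
    using assms(3) unfolding bipartite_def by blast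
  interpret cbg V E X Y using assms(1,2) XY by (unfold_locales) auto
  obtain u v where uv: "u \<in> X" "v \<in> Y" "e = {u, v}" using edge_XY[OF assms(6)] by blast
  have cV: "card V = card X + card Y" using XY(1,2) finX finY card_Un_disjoint by metis
  then have cX4: "card X \<ge> 4" using cardXY assms(5) by simp
  define D where "D = {a\<in>X. {a, v} \<in> E}"
  have uD: "u \<in> D" using uv assms(6) unfolding D_def by simp
  have "card D \<le> card (star v)"
  proof (rule card_inj_on_le)
    show "inj_on (\<lambda>a. {a, v}) D"
    proof (rule inj_onI)
      fix a a' assume aa: "a \<in> D" "a' \<in> D" "{a, v} = {a', v}"
      have "a \<noteq> v" "a' \<noteq> v" using aa(1,2) uv(2) XY(2) unfolding D_def by auto
      then show "a = a'" using aa(3) by (metis doubleton_eq_iff)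
    qed
    show "(\<lambda>a. {a, v}) ` D \<subseteq> star v" unfolding D_def star_def by auto
    show "finite (star v)" by (rule finstar)
  qed
  then have cD: "card D \<le> 3" using card_star uv(2) XY(1) by auto
  have "\<not> X \<subseteq> D"
  proof
    assume "X \<subseteq> D"
    then have "card X \<le> card D" using card_mono[of D X] finX unfolding D_def by auto
    then show False using cD cX4 by simp
  qed
  then obtain w where w: "w \<in> X" "w \<notin> D" by blast
  have wu: "w \<noteq> u" using w uD by blast
  have wv: "{w, v} \<notin> E" using w unfolding D_def by simp
  have wV: "w \<in> V" using w XY(1) by blast
  define P where "P = (\<lambda>f M. perfect_matching V E M \<and> e \<in> M \<and> f \<in> M)"
  have exM: "\<exists>M. P f M" if f: "f \<in> star w" for f
  proof -
    obtain z where z: "z \<in> Y" "f = {w, z}" using star_X[OF w(1) f] by blast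
    have fE: "f \<in> E" using f unfolding star_def by simp
    have "z \<noteq> v" using z fE wv by blast
    then have "v \<noteq> z" by simp
    have "{u, v} \<in> E" using assms(6) uv by simp
    moreover have "{w, z} \<in> E" using fE z by simp
    ultimately obtain M where "perfect_matching V E M" "{u, v} \<in> M" "{w, z} \<in> M"
      using two_edges[OF assms(4) uv(1) w(1) wu[symmetric] uv(2) z(1) \<open>v \<noteq> z\<close>] by blast
    then show ?thesis unfolding P_def using uv z by blast
  qed
  define Mf where "Mf = (\<lambda>f. SOME M. P f M)"
  have Mf: "P f (Mf f)" if "f \<in> star w" for f
    unfolding Mf_def using exM[OF that] by (rule someI_ex)
  have injM: "inj_on Mf (star w)"
  proof (rule inj_onI)
    fix f1 f2 assume f: "f1 \<in> star w" "f2 \<in> star w" "Mf f1 = Mf f2"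
    have p1: "P f1 (Mf f1)" using Mf f(1) .
    have p2: "P f2 (Mf f1)" using Mf[OF f(2)] f(3) by simp
    have pm: "perfect_matching V E (Mf f1)" using p1 unfolding P_def by simp
    then have u1: "\<exists>!g. g \<in> Mf f1 \<and> w \<in> g" using wV unfolding perfect_matching_def by blast
    have "f1 \<in> Mf f1" "w \<in> f1" using p1 f(1) unfolding P_def star_def by auto
    moreover have "f2 \<in> Mf f1" "w \<in> f2" using p2 f(2) unfolding P_def star_def by auto
    ultimately show "f1 = f2" using u1 by blast
  qed
  have sub: "Mf ` star w \<subseteq> {M. perfect_matching V E M \<and> e \<in> M}"
  proof
    fix M assume "M \<in> Mf ` star w"
    then obtain f where "f \<in> star w" "M = Mf f" by blast
    then show "M \<in> {M. perfect_matching V E M \<and> e \<in> M}" using Mf unfolding P_def by blast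
  qed
  have fin: "finite {M. perfect_matching V E M \<and> e \<in> M}"
  proof (rule finite_subset)
    show "{M. perfect_matching V E M \<and> e \<in> M} \<subseteq> Pow E" unfolding perfect_matching_def by blast
    show "finite (Pow E)" using finE by simp
  qed
  have "card (Mf ` star w) = 3" using card_image[OF injM] card_star[OF wV] by simp
  then show ?thesis using card_mono[OF fin sub] by simp
qed

end
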